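(* Let $G=([n],E)$ be a persistent graph and let $a<b<c$ be vertices of a 3-simplex $S\in\Xi(G)$. Then $G$ does not contain any edge $\{x,y\}$ with $a<x<b<y<c$.
   Context: A graph $G=([n],E)$ is persistent if (1) $\{i,i+1\}\in E$ for all $1\le i<n$; (2) (X-property) if $\{a,c\},\{b,d\}\in E$ for $a<b<c<d$ then $\{a,d\}\in E$; (3) (bar-property) for every edge $\{a,b\}\in E$ with $a<b-1$ there is $x$ with $a<x<b$ and $\{a,x\},\{x,b\}\in E$. For a persistent $G$, $\hat G$ is the graph on $\{0,1,\dots,n+1\}$ with edge set $E$ together with all pairs $\{0,i\}$ and $\{n+1,i\}$ ($i\in\{0,\dots,n+1\}$, $i\ne 0$ resp. $i \ne n+1$). For an edge $e=\{v,w\}\in E$ with $v<w$, let $\ell_G(e)=\max\{i : i<v,\ \{i,w\}\in E(\hat G)\}$ and $r_G(e)=\min\{i : w<i,\ \{i,v\}\in E(\hat G)\}$, and $\xi_G(e)=\{\ell_G(e),v,w,r_G(e)\}$. Then $\Xi(G)=\{\xi_G(e): e\in E\}$, a set of 4-element subsets of $\{0,\dots,n+1\}$. *)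

theory Defs
  imports Main
begin

definition graph_on :: "nat \<Rightarrow> nat set set \<Rightarrow> bool" where
  "graph_on n E \<longleftrightarrow> (\<forall>e\<in>E. \<exists>a b. e = {a, b} \<and> a \<noteq> b \<and> a \<in> {1..n} \<and> b \<in> {1..n})"

definition persistent :: "nat \<Rightarrow> nat set set \<Rightarrow> bool" where
  "persistent n E \<longleftrightarrow> graph_on n E
     \<and> (\<forall>i. 1 \<le> i \<and> i < n \<longrightarrow> {i, i + 1} \<in> E)
     \<and> (\<forall>a b c d. a < b \<and> b < c \<and> c < d \<and> {a, c} \<in> E \<and> {b, d} \<in> E \<longrightarrow> {a, d} \<in> E)
     \<and> (\<forall>a b. {a, b} \<in> E \<and> a + 1 < b \<longrightarrow> (\<exists>x. a < x \<and> x < b \<and> {a, x} \<in> E \<and> {x, b} \<in> E))"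

definition hat_edges :: "nat \<Rightarrow> nat set set \<Rightarrow> nat set set" where
  "hat_edges n E = E \<union> {{0, i} | i. i \<in> {0..n+1} \<and> i \<noteq> 0}
                     \<union> {{n + 1, i} | i. i \<in> {0..n+1} \<and> i \<noteq> n + 1}"

definition ell :: "nat \<Rightarrow> nat set set \<Rightarrow> nat \<Rightarrow> nat \<Rightarrow> nat" where
  "ell n E v w = Max {i. i < v \<and> {i, w} \<in> hat_edges n E}"

definition arr :: "nat \<Rightarrow> nat set set \<Rightarrow> nat \<Rightarrow> nat \<Rightarrow> nat" where
  "arr n E v w = Min {i. w < i \<and> {i, v} \<in> hat_edges n E}"

definition xi :: "nat \<Rightarrow> nat set set \<Rightarrow> nat \<Rightarrow> nat \<Rightarrow> nat set" where
  "xi n E v w = {ell n E v w, v, w, arr n E v w}"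

definition Xi :: "nat \<Rightarrow> nat set set \<Rightarrow> nat set set" where
  "Xi n E = {xi n E v w | v w. v < w \<and> {v, w} \<in> E}"

end

theory Submission
  imports Defs
begin

lemma E_sub: "E \<subseteq> hat_edges n E"
  unfolding hat_edges_def by (rule subsetI) (rule UnI1, rule UnI1)

lemma hat0: "w \<le> n + 1 \<Longrightarrow> w \<noteq> 0 \<Longrightarrow> {0, w} \<in> hat_edges n E"
  unfolding hat_edges_def by (rule UnI1, rule UnI2) auto

lemma hatn: "v \<le> n + 1 \<Longrightarrow> v \<noteq> n + 1 \<Longrightarrow> {n + 1, v} \<in> hat_edges n E"
  unfolding hat_edges_def by (rule UnI2) auto

lemma hat_sub:
  assumes "graph_on n E" "e \<in> hat_edges n E"
  shows "e \<subseteq> {0..n+1}"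
proof -
  consider "e \<in> E" | "e \<in> {{0, i} | i. i \<in> {0..n+1} \<and> i \<noteq> 0}"
    | "e \<in> {{n + 1, i} | i. i \<in> {0..n+1} \<and> i \<noteq> n + 1}"
    using assms(2) unfolding hat_edges_def by (elim UnE) auto
  then show ?thesis
  proof cases
    case 1
    then obtain a b where "e = {a, b}" "a \<in> {1..n}" "b \<in> {1..n}"
      using assms(1) unfolding graph_on_def by blast
    then show ?thesis by auto
  next
    case 2 then show ?thesis by auto
  next
    case 3 then show ?thesis by auto
  qed
qed

lemma pG: "persistent n E \<Longrightarrow> graph_on n E"
  unfolding persistent_def by (elim conjE)

lemma pX: assumes "persistent n E" "a < b" "b < c" "c < d" "{a, c} \<in> E" "{b, d} \<in> E"
  shows "{a, d} \<in> E"
proof -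
  have H: "\<forall>a b c d. a < b \<and> b < c \<and> c < d \<and> {a, c} \<in> E \<and> {b, d} \<in> E \<longrightarrow> {a, d} \<in> E"
    using assms(1) unfolding persistent_def by (elim conjE)
  show ?thesis using H assms(2-6) by blast
qed

lemma pbar: assumes "persistent n E" "{a, b} \<in> E" "a + 1 < b"
  shows "\<exists>x. a < x \<and> x < b \<and> {a, x} \<in> E \<and> {x, b} \<in> E"
proof -
  have H: "\<forall>a b. {a, b} \<in> E \<and> a + 1 < b \<longrightarrow> (\<exists>x. a < x \<and> x < b \<and> {a, x} \<in> E \<and> {x, b} \<in> E)"
    using assms(1) unfolding persistent_def by (elim conjE)
  show ?thesis using H assms(2-3) by blast
qed

lemma nested:
  assumes P: "persistent n E"
    and A: "\<And>x. {x, w} \<in> E \<Longrightarrow> l < x \<Longrightarrow> x < v \<Longrightarrow> False"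
    and B: "\<And>y. {v, y} \<in> E \<Longrightarrow> w < y \<Longrightarrow> y < r \<Longrightarrow> False"
    and vw: "{v, w} \<in> E" "v < w"
  shows "{x, y} \<in> E \<Longrightarrow> l < x \<Longrightarrow> x < v \<Longrightarrow> w < y \<Longrightarrow> y < r \<Longrightarrow> False"
proof (induction "y - x" arbitrary: x y rule: less_induct)
  case less
  have X: "\<And>a b c d. a < b \<Longrightarrow> b < c \<Longrightarrow> c < d \<Longrightarrow> {a, c} \<in> E \<Longrightarrow> {b, d} \<in> E \<Longrightarrow> {a, d} \<in> E"
    using pX[OF P] by blast
  have bar: "\<exists>z. x < z \<and> z < y \<and> {x, z} \<in> E \<and> {z, y} \<in> E"
  proof -
    have "x + 1 < y" using less.prems vw(2) by linarith
    then show ?thesis using pbar[OF P less.prems(1)] by blast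
  qed
  then obtain z where z: "x < z" "z < y" "{x, z} \<in> E" "{z, y} \<in> E" by blast
  consider "z < v" | "z = v" | "v < z \<and> z < w" | "z = w" | "w < z" by linarith
  then show ?case
  proof cases
    case 1
    have "y - z < y - x" "l < z" using z less.prems by linarith+
    then show ?thesis using less.hyps[of y z] z less.prems 1 by blast
  next
    case 2 then show ?thesis using B z less.prems by auto
  next
    case 3 then show ?thesis using X[of x v z w] A[of x] z less.prems vw by auto
  next
    case 4 then show ?thesis using A z less.prems by auto
  next
    case 5
    have "z - x < y - x" "w < z" "z < r" using z 5 less.prems by linarith+
    then show ?thesis using less.hyps[of z x] z less.prems 5 by blast
  qed
qed

theorem lemma10:
  fixes n :: nat and E :: "nat set set" and S :: "nat set" and a b c :: nat
  assumes "persistent n E"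
    and "S \<in> Xi n E"
    and "a \<in> S" and "b \<in> S" and "c \<in> S"
    and "a < b" and "b < c"
  shows "\<not> (\<exists>x y. {x, y} \<in> E \<and> a < x \<and> x < b \<and> b < y \<and> y < c)"
proof
  assume "\<exists>x y. {x, y} \<in> E \<and> a < x \<and> x < b \<and> b < y \<and> y < c"
  then obtain x y where xy: "{x, y} \<in> E" "a < x" "x < b" "b < y" "y < c" by blast
  have P: "persistent n E" by fact
  have G: "graph_on n E" using pG[OF P] .
  have X: "\<And>a b c d. a < b \<Longrightarrow> b < c \<Longrightarrow> c < d \<Longrightarrow> {a, c} \<in> E \<Longrightarrow> {b, d} \<in> E \<Longrightarrow> {a, d} \<in> E"
    using pX[OF P] by blast
  obtain v w where S: "S = xi n E v w" and vw: "v < w" "{v, w} \<in> E"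
    using assms(2) unfolding Xi_def by blast
  have vwr: "v \<in> {1..n}" "w \<in> {1..n}"
    using G vw unfolding graph_on_def by (metis doubleton_eq_iff)+
  define L where "L = {i. i < v \<and> {i, w} \<in> hat_edges n E}"
  define R where "R = {i. w < i \<and> {i, v} \<in> hat_edges n E}"
  have L0: "0 \<in> L" using vwr hat0[of w n E] unfolding L_def by auto
  have Lf: "finite L" unfolding L_def by (rule finite_subset[of _ "{..<v}"]) auto
  have lL: "ell n E v w \<in> L"
    unfolding ell_def L_def[symmetric] using Max_in[OF Lf] L0 by blast
  have lmax: "\<And>i. i \<in> L \<Longrightarrow> i \<le> ell n E v w"
    unfolding ell_def L_def[symmetric] using Max_ge[OF Lf] by blast
  have R0: "n + 1 \<in> R" using vwr hatn[of v n E] vw unfolding R_def by auto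
  have Rf: "finite R"
  proof (rule finite_subset[of _ "{0..n+1}"])
    show "R \<subseteq> {0..n+1}" unfolding R_def using hat_sub[OF G] by blast
  qed auto
  have rR: "arr n E v w \<in> R"
    unfolding arr_def R_def[symmetric] using Min_in[OF Rf] R0 by blast
  have rmin: "\<And>i. i \<in> R \<Longrightarrow> arr n E v w \<le> i"
    unfolding arr_def R_def[symmetric] using Min_le[OF Rf] by blast
  define l where "l = ell n E v w"
  define r where "r = arr n E v w"
  have lv: "l < v" using lL unfolding L_def l_def by auto
  have wr: "w < r" using rR unfolding R_def r_def by auto
  have A: "\<And>x. {x, w} \<in> E \<Longrightarrow> l < x \<Longrightarrow> x < v \<Longrightarrow> False"
  proof -
    fix x assume "{x, w} \<in> E" "l < x" "x < v"
    have "{x, w} \<in> hat_edges n E" using \<open>{x, w} \<in> E\<close> E_sub[of E n] by blast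
    then have "x \<in> L" unfolding L_def using \<open>x < v\<close> by simp
    then have "x \<le> l" unfolding l_def by (rule lmax)
    then show False using \<open>l < x\<close> by simp
  qed
  have B: "\<And>y. {v, y} \<in> E \<Longrightarrow> w < y \<Longrightarrow> y < r \<Longrightarrow> False"
  proof -
    fix y assume "{v, y} \<in> E" "w < y" "y < r"
    then have "{y, v} \<in> E" by (simp add: insert_commute)
    then have "{y, v} \<in> hat_edges n E" using E_sub[of E n] by blast
    then have "y \<in> R" unfolding R_def using \<open>w < y\<close> by simp
    then have "r \<le> y" unfolding r_def by (rule rmin)
    then show False using \<open>y < r\<close> by simp
  qed
  have N: "\<And>x y. {x, y} \<in> E \<Longrightarrow> l < x \<Longrightarrow> x < v \<Longrightarrow> w < y \<Longrightarrow> y < r \<Longrightarrow> False"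
  proof -
    fix x y assume "{x, y} \<in> E" "l < x" "x < v" "w < y" "y < r"
    then show False using nested[of n E w l v r x y] P A B vw by blast
  qed
  have Sx: "S = {l, v, w, r}" using S unfolding xi_def l_def r_def by simp
  have cases: "(a = l \<and> b = v \<and> c = w) \<or> (a = l \<and> b = v \<and> c = r) \<or>
      (a = l \<and> b = w \<and> c = r) \<or> (a = v \<and> b = w \<and> c = r)"
  proof -
    have "a = l \<or> a = v \<or> a = w \<or> a = r" "b = l \<or> b = v \<or> b = w \<or> b = r"
      "c = l \<or> c = v \<or> c = w \<or> c = r" using assms(3-5) Sx by auto
    then show ?thesis using assms(6,7) lv vw(1) wr by (elim disjE; simp)
  qed
  then show False
  proof (elim disjE conjE)
    assume "a = l" "b = v" "c = w"
    then show False using X[of x v y w] A[of x] xy vw by auto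
  next
    assume "a = v" "b = w" "c = r"
    then show False using X[of v x w y] B[of y] xy vw by auto
  next
    assume h: "a = l" "b = v" "c = r"
    consider "y < w" | "y = w" | "w < y" by linarith
    then show False
    proof cases
      case 1 then show ?thesis using h X[of x v y w] A[of x] xy vw by auto
    next
      case 2 then show ?thesis using h A[of x] xy by auto
    next
      case 3 then show ?thesis using h N[of x y] xy by auto
    qed
  next
    assume h: "a = l" "b = w" "c = r"
    consider "x < v" | "x = v" | "v < x" by linarith
    then show False
    proof cases
      case 1 then show ?thesis using h N[of x y] xy by auto
    next
      case 2 then show ?thesis using h B[of y] xy by auto
    next
      case 3 then show ?thesis using h X[of v x w y] B[of y] xy vw by auto
    qed
  qed
qed

end
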